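(* If $C\subseteq\mathbb{R}$ satisfies $|C|=|\mathbb{R}\setminus C|=\mathfrak{c}$, then there is a two-point selection $f$ on $\mathbb{R}$ such that $C\in\mathcal{M}_f\setminus\mathcal{B}_f(\mathbb{R})$.
   Context: $\mathfrak{c}=|\mathbb{R}|$. A two-point selection on $\mathbb{R}$ is a function $f$ from the set of two-element subsets of $\mathbb{R}$ to $\mathbb{R}$ with $f(F)\in F$. Write $r<_f s$ if $f(\{r,s\})=r$ ($r\ne s$) and $r\le_f s$ if $r<_f s$ or $r=s$. Put $(\leftarrow,r)_f=\{x: x<_f r\}$, $(r,\rightarrow)_f=\{x: r<_f x\}$, and $(r,s]_f=\{x: r<_f x \text{ and } x\le_f s\}$. The topology $\tau_f$ is generated (as a subbase) by all $(\leftarrow,r)_f$, $(r,\rightarrow)_f$; $\mathcal{B}_f(\mathbb{R})$ is the $\sigma$-algebra generated by $\tau_f$. The outer measure $\lambda_f$ on $\mathbb{R}$ is $\lambda_f(A)=\inf\{\sum_{n\in\mathbb{N}}|s_n-r_n| : A\subseteq\bigcup_{n\in\mathbb{N}}(r_n,s_n]_f\}$ if $A$ can be covered by countably many such sets, and $\lambda_f(A)=+\infty$ otherwise. $\mathcal{M}_f$ is the $\sigma$-algebra of $\lambda_f$-measurable sets (in the sense of Carathéodory). *)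

theory Defs
  imports "HOL-Analysis.Analysis" "HOL-Library.Equipollence"
begin

text \<open>A two-point selection on the reals: a choice function on two-element subsets.
  (Values on sets that are not two-element are irrelevant.)\<close>
definition two_point_selection :: "(real set \<Rightarrow> real) \<Rightarrow> bool" where
  "two_point_selection f \<longleftrightarrow> (\<forall>F. card F = 2 \<longrightarrow> f F \<in> F)"

definition sel_less :: "(real set \<Rightarrow> real) \<Rightarrow> real \<Rightarrow> real \<Rightarrow> bool" where
  "sel_less f r s \<longleftrightarrow> r \<noteq> s \<and> f {r, s} = r"

definition sel_le :: "(real set \<Rightarrow> real) \<Rightarrow> real \<Rightarrow> real \<Rightarrow> bool" where
  "sel_le f r s \<longleftrightarrow> sel_less f r s \<or> r = s"

definition sel_ray_left :: "(real set \<Rightarrow> real) \<Rightarrow> real \<Rightarrow> real set" where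
  "sel_ray_left f r = {x. sel_less f x r}"

definition sel_ray_right :: "(real set \<Rightarrow> real) \<Rightarrow> real \<Rightarrow> real set" where
  "sel_ray_right f r = {x. sel_less f r x}"

definition sel_Ioc :: "(real set \<Rightarrow> real) \<Rightarrow> real \<Rightarrow> real \<Rightarrow> real set" where
  "sel_Ioc f r s = {x. sel_less f r x \<and> sel_le f x s}"

definition sel_topology :: "(real set \<Rightarrow> real) \<Rightarrow> real topology" where
  "sel_topology f = topology_generated_by
     ({sel_ray_left f r | r. True} \<union> {sel_ray_right f r | r. True})"

definition sel_borel :: "(real set \<Rightarrow> real) \<Rightarrow> real set set" where
  "sel_borel f = sigma_sets UNIV {U. openin (sel_topology f) U}"

text \<open>The outer measure \<lambda>_f; the infimum of the empty set is \<infinity> in ennreal.\<close>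
definition sel_outer :: "(real set \<Rightarrow> real) \<Rightarrow> real set \<Rightarrow> ennreal" where
  "sel_outer f A = Inf {(\<Sum>n. ennreal \<bar>s n - r n\<bar>) | r s :: nat \<Rightarrow> real.
                         A \<subseteq> (\<Union>n. sel_Ioc f (r n) (s n))}"

definition sel_measurable :: "(real set \<Rightarrow> real) \<Rightarrow> real set set" where
  "sel_measurable f = lambda_system UNIV UNIV (sel_outer f)"

end

theory Submission
  imports Defs
begin


definition klt :: "(real \<Rightarrow> real) \<Rightarrow> real set \<Rightarrow> real \<Rightarrow> real \<Rightarrow> bool" where
  "klt p C x y \<longleftrightarrow> p x < p y \<or> (p x = p y \<and> x \<in> C \<and> y \<notin> C)"

definition fsel :: "(real \<Rightarrow> real) \<Rightarrow> real set \<Rightarrow> real set \<Rightarrow> real" where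
  "fsel p C F = (SOME x. x \<in> F \<and> (\<forall>y\<in>F. y \<noteq> x \<longrightarrow> klt p C x y))"

definition splitset :: "(real \<Rightarrow> real) \<Rightarrow> real set \<Rightarrow> real set \<Rightarrow> real set" where
  "splitset p C A = {v. \<exists>x y. x \<in> C \<and> y \<notin> C \<and> p x = v \<and> p y = v \<and> (x \<in> A \<longleftrightarrow> y \<notin> A)}"

definition goodopen :: "(real \<Rightarrow> real) \<Rightarrow> real set \<Rightarrow> real set \<Rightarrow> bool" where
  "goodopen p C U \<longleftrightarrow> (\<forall>x\<in>U. (x \<in> C \<longrightarrow> (\<exists>w<p x. \<forall>z. w < p z \<and> p z < p x \<longrightarrow> z \<in> U))
      \<and> (x \<notin> C \<longrightarrow> (\<exists>w>p x. \<forall>z. p x < p z \<and> p z < w \<longrightarrow> z \<in> U)))"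

lemma klt_asym: "klt p C x y \<Longrightarrow> \<not> klt p C y x"
  unfolding klt_def by auto

lemma klt_total:
  assumes inj: "\<And>x y. p x = p y \<Longrightarrow> (x \<in> C \<longleftrightarrow> y \<in> C) \<Longrightarrow> x = y"
  shows "x \<noteq> y \<Longrightarrow> klt p C x y \<or> klt p C y x"
  unfolding klt_def by (metis inj linorder_neqE_linordered_idom)

lemma fsel_pair:
  assumes inj: "\<And>x y. p x = p y \<Longrightarrow> (x \<in> C \<longleftrightarrow> y \<in> C) \<Longrightarrow> x = y"
    and "r \<noteq> s"
  shows "fsel p C {r, s} = (if klt p C r s then r else s)"
proof -
  let ?P = "\<lambda>x. x \<in> {r,s} \<and> (\<forall>y\<in>{r,s}. y \<noteq> x \<longrightarrow> klt p C x y)"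
  have ex: "\<exists>x. ?P x" using klt_total[OF inj \<open>r \<noteq> s\<close>] by auto
  have P: "?P (fsel p C {r,s})" unfolding fsel_def by (rule someI_ex[OF ex])
  show ?thesis
  proof (cases "klt p C r s")
    case True
    then show ?thesis using P klt_asym[OF True] by auto
  next
    case False
    then show ?thesis using P assms(2) by auto
  qed
qed

lemma sel_less_fsel:
  assumes inj: "\<And>x y. p x = p y \<Longrightarrow> (x \<in> C \<longleftrightarrow> y \<in> C) \<Longrightarrow> x = y"
  shows "sel_less (fsel p C) r s \<longleftrightarrow> klt p C r s"
proof (cases "r = s")
  case True then show ?thesis by (simp add: sel_less_def klt_def)
next
  case False
  show ?thesis using fsel_pair[OF inj False] klt_total[OF inj False] klt_asym False
    by (auto simp: sel_less_def)
qed

lemma two_point_fsel: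
  assumes inj: "\<And>x y. p x = p y \<Longrightarrow> (x \<in> C \<longleftrightarrow> y \<in> C) \<Longrightarrow> x = y"
  shows "two_point_selection (fsel p C)"
  unfolding two_point_selection_def
proof (intro allI impI)
  fix F :: "real set" assume "card F = 2"
  then obtain r s where F: "F = {r,s}" "r \<noteq> s" by (auto simp: card_2_iff)
  show "fsel p C F \<in> F" using F fsel_pair[OF inj F(2)] by auto
qed

lemma goodopenD1: "goodopen p C U \<Longrightarrow> x \<in> U \<Longrightarrow> x \<in> C \<Longrightarrow> \<exists>w<p x. \<forall>z. w < p z \<and> p z < p x \<longrightarrow> z \<in> U"
  unfolding goodopen_def by blast

lemma goodopenD2: "goodopen p C U \<Longrightarrow> x \<in> U \<Longrightarrow> x \<notin> C \<Longrightarrow> \<exists>w>p x. \<forall>z. p x < p z \<and> p z < w \<longrightarrow> z \<in> U"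
  unfolding goodopen_def by blast

lemma goodopenI:
  assumes "\<And>x. x \<in> U \<Longrightarrow> x \<in> C \<Longrightarrow> \<exists>w<p x. \<forall>z. w < p z \<and> p z < p x \<longrightarrow> z \<in> U"
    and "\<And>x. x \<in> U \<Longrightarrow> x \<notin> C \<Longrightarrow> \<exists>w>p x. \<forall>z. p x < p z \<and> p z < w \<longrightarrow> z \<in> U"
  shows "goodopen p C U"
  unfolding goodopen_def using assms by blast

lemma goodopen_gen:
  assumes inj: "\<And>x y. p x = p y \<Longrightarrow> (x \<in> C \<longleftrightarrow> y \<in> C) \<Longrightarrow> x = y"
  assumes "generate_topology_on ({sel_ray_left (fsel p C) r | r. True} \<union> {sel_ray_right (fsel p C) r | r. True}) U"
  shows "goodopen p C U"
  using assms(2)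
proof induction
  case Empty
  then show ?case by (simp add: goodopen_def)
next
  case (Int a b)
  show ?case
  proof (rule goodopenI)
    fix x assume x: "x \<in> a \<inter> b" and xc: "x \<in> C"
    obtain w1 where w1: "w1 < p x" "\<forall>z. w1 < p z \<and> p z < p x \<longrightarrow> z \<in> a"
      using goodopenD1[OF Int.IH(1) _ xc] x by blast
    obtain w2 where w2: "w2 < p x" "\<forall>z. w2 < p z \<and> p z < p x \<longrightarrow> z \<in> b"
      using goodopenD1[OF Int.IH(2) _ xc] x by blast
    show "\<exists>w<p x. \<forall>z. w < p z \<and> p z < p x \<longrightarrow> z \<in> a \<inter> b"
    proof (intro exI conjI allI impI)
      show "max w1 w2 < p x" using w1 w2 by simp
      fix z assume "max w1 w2 < p z \<and> p z < p x"
      then show "z \<in> a \<inter> b" using w1(2) w2(2) by simp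
    qed
  next
    fix x assume x: "x \<in> a \<inter> b" and xc: "x \<notin> C"
    obtain w1 where w1: "w1 > p x" "\<forall>z. p x < p z \<and> p z < w1 \<longrightarrow> z \<in> a"
      using goodopenD2[OF Int.IH(1) _ xc] x by blast
    obtain w2 where w2: "w2 > p x" "\<forall>z. p x < p z \<and> p z < w2 \<longrightarrow> z \<in> b"
      using goodopenD2[OF Int.IH(2) _ xc] x by blast
    show "\<exists>w>p x. \<forall>z. p x < p z \<and> p z < w \<longrightarrow> z \<in> a \<inter> b"
    proof (intro exI conjI allI impI)
      show "min w1 w2 > p x" using w1 w2 by simp
      fix z assume "p x < p z \<and> p z < min w1 w2"
      then show "z \<in> a \<inter> b" using w1(2) w2(2) by simp
    qed
  qed
next
  case (UN K)
  show ?case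
  proof (rule goodopenI)
    fix x assume "x \<in> \<Union>K" and xc: "x \<in> C"
    then obtain k where k: "k \<in> K" "x \<in> k" by blast
    obtain w where w: "w < p x" "\<forall>z. w < p z \<and> p z < p x \<longrightarrow> z \<in> k"
      using goodopenD1[OF UN.IH[OF k(1)] k(2) xc] by blast
    show "\<exists>w<p x. \<forall>z. w < p z \<and> p z < p x \<longrightarrow> z \<in> \<Union>K"
      using w k(1) by blast
  next
    fix x assume "x \<in> \<Union>K" and xc: "x \<notin> C"
    then obtain k where k: "k \<in> K" "x \<in> k" by blast
    obtain w where w: "w > p x" "\<forall>z. p x < p z \<and> p z < w \<longrightarrow> z \<in> k"
      using goodopenD2[OF UN.IH[OF k(1)] k(2) xc] by blast
    show "\<exists>w>p x. \<forall>z. p x < p z \<and> p z < w \<longrightarrow> z \<in> \<Union>K"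
      using w k(1) by blast
  qed
next
  case (Basis s)
  then obtain r where "s = sel_ray_left (fsel p C) r \<or> s = sel_ray_right (fsel p C) r" by blast
  then show ?case
  proof
    assume s: "s = sel_ray_left (fsel p C) r"
    have s': "s = {x. klt p C x r}" unfolding s sel_ray_left_def by (simp only: sel_less_fsel[OF inj])
    show ?thesis unfolding s'
    proof (rule goodopenI)
      fix x assume x: "x \<in> {x. klt p C x r}" and "x \<in> C"
      show "\<exists>w<p x. \<forall>z. w < p z \<and> p z < p x \<longrightarrow> z \<in> {x. klt p C x r}"
      proof (intro exI conjI allI impI)
        show "p x - 1 < p x" by simp
        fix z assume "p x - 1 < p z \<and> p z < p x"
        then show "z \<in> {x. klt p C x r}" using x unfolding klt_def by auto
      qed
    next
      fix x assume x: "x \<in> {x. klt p C x r}" and "x \<notin> C"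
      then have "p x < p r" unfolding klt_def by auto
      show "\<exists>w>p x. \<forall>z. p x < p z \<and> p z < w \<longrightarrow> z \<in> {x. klt p C x r}"
      proof (intro exI conjI allI impI)
        show "p r > p x" by fact
        fix z assume "p x < p z \<and> p z < p r"
        then show "z \<in> {x. klt p C x r}" unfolding klt_def by auto
      qed
    qed
  next
    assume s: "s = sel_ray_right (fsel p C) r"
    have s': "s = {x. klt p C r x}" unfolding s sel_ray_right_def by (rule Collect_cong) (rule sel_less_fsel[OF inj])
    show ?thesis unfolding s'
    proof (rule goodopenI)
      fix x assume x: "x \<in> {x. klt p C r x}" and "x \<in> C"
      then have "p r < p x" unfolding klt_def by auto
      show "\<exists>w<p x. \<forall>z. w < p z \<and> p z < p x \<longrightarrow> z \<in> {x. klt p C r x}"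
      proof (intro exI conjI allI impI)
        show "p r < p x" by fact
        fix z assume "p r < p z \<and> p z < p x"
        then show "z \<in> {x. klt p C r x}" unfolding klt_def by auto
      qed
    next
      fix x assume x: "x \<in> {x. klt p C r x}" and "x \<notin> C"
      show "\<exists>w>p x. \<forall>z. p x < p z \<and> p z < w \<longrightarrow> z \<in> {x. klt p C r x}"
      proof (intro exI conjI allI impI)
        show "p x + 1 > p x" by simp
        fix z assume "p x < p z \<and> p z < p x + 1"
        then show "z \<in> {x. klt p C r x}" using x unfolding klt_def by auto
      qed
    qed
  qed
qed

lemma goodopen_split:
  assumes "goodopen p C U"
  shows "countable (splitset p C U)"
proof -
  define V1 where "V1 = {v. \<exists>x y. x \<in> C \<and> y \<notin> C \<and> p x = v \<and> p y = v \<and> x \<in> U \<and> y \<notin> U}"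
  define V2 where "V2 = {v. \<exists>x y. x \<in> C \<and> y \<notin> C \<and> p x = v \<and> p y = v \<and> x \<notin> U \<and> y \<in> U}"
  have "splitset p C U \<subseteq> V1 \<union> V2" unfolding splitset_def V1_def V2_def by auto
  moreover have "countable V1"
  proof -
    have "\<forall>v\<in>V1. \<exists>q. q \<in> \<rat> \<and> (\<exists>w<v. w < q \<and> q < v \<and> (\<forall>z. w < p z \<and> p z < v \<longrightarrow> z \<in> U))"
    proof
      fix v assume "v \<in> V1"
      then obtain x where x: "x \<in> C" "x \<in> U" "p x = v" unfolding V1_def by auto
      then obtain w where w: "w < v" "\<forall>z. w < p z \<and> p z < v \<longrightarrow> z \<in> U"
        using assms unfolding goodopen_def by blast
      obtain q where "q \<in> \<rat>" "w < q" "q < v" using Rats_dense_in_real[OF w(1)] by auto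
      then show "\<exists>q. q \<in> \<rat> \<and> (\<exists>w<v. w < q \<and> q < v \<and> (\<forall>z. w < p z \<and> p z < v \<longrightarrow> z \<in> U))"
        using w by blast
    qed
    then obtain Q where Q: "\<And>v. v \<in> V1 \<Longrightarrow> Q v \<in> \<rat> \<and> (\<exists>w<v. w < Q v \<and> Q v < v \<and> (\<forall>z. w < p z \<and> p z < v \<longrightarrow> z \<in> U))"
      by metis
    have "inj_on Q V1"
    proof (rule inj_onI)
      fix v v' assume v: "v \<in> V1" "v' \<in> V1" "Q v = Q v'"
      show "v = v'"
      proof (rule ccontr)
        assume "v \<noteq> v'"
        have *: False if a: "a \<in> V1" "b \<in> V1" "Q a = Q b" "a < b" for a b
        proof -
          obtain y where y: "y \<notin> U" "p y = a" using a(1) unfolding V1_def by auto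
          obtain w where "w < Q b" "Q b < b" "\<forall>z. w < p z \<and> p z < b \<longrightarrow> z \<in> U" using Q[OF a(2)] by auto
          moreover have "Q a < a" using Q[OF a(1)] by auto
          ultimately show False using y a by force
        qed
        show False using \<open>v \<noteq> v'\<close> *[of v v'] *[of v' v] v by linarith
      qed
    qed
    moreover have "Q ` V1 \<subseteq> \<rat>" using Q by auto
    ultimately show ?thesis by (meson countable_image_inj_on countable_rat countable_subset)
  qed
  moreover have "countable V2"
  proof -
    have "\<forall>v\<in>V2. \<exists>q. q \<in> \<rat> \<and> (\<exists>w>v. v < q \<and> q < w \<and> (\<forall>z. v < p z \<and> p z < w \<longrightarrow> z \<in> U))"
    proof
      fix v assume "v \<in> V2"
      then obtain y where y: "y \<notin> C" "y \<in> U" "p y = v" unfolding V2_def by auto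
      then obtain w where w: "v < w" "\<forall>z. v < p z \<and> p z < w \<longrightarrow> z \<in> U"
        using assms unfolding goodopen_def by blast
      obtain q where "q \<in> \<rat>" "v < q" "q < w" using Rats_dense_in_real[OF w(1)] by auto
      then show "\<exists>q. q \<in> \<rat> \<and> (\<exists>w>v. v < q \<and> q < w \<and> (\<forall>z. v < p z \<and> p z < w \<longrightarrow> z \<in> U))"
        using w by blast
    qed
    then obtain Q where Q: "\<And>v. v \<in> V2 \<Longrightarrow> Q v \<in> \<rat> \<and> (\<exists>w>v. v < Q v \<and> Q v < w \<and> (\<forall>z. v < p z \<and> p z < w \<longrightarrow> z \<in> U))"
      by metis
    have "inj_on Q V2"
    proof (rule inj_onI)
      fix v v' assume v: "v \<in> V2" "v' \<in> V2" "Q v = Q v'"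
      show "v = v'"
      proof (rule ccontr)
        assume "v \<noteq> v'"
        have *: False if a: "a \<in> V2" "b \<in> V2" "Q a = Q b" "a < b" for a b
        proof -
          obtain x where x: "x \<notin> U" "p x = b" using a(2) unfolding V2_def by auto
          obtain w where "a < Q a" "Q a < w" "\<forall>z. a < p z \<and> p z < w \<longrightarrow> z \<in> U" using Q[OF a(1)] by auto
          moreover have "b < Q b" using Q[OF a(2)] by auto
          ultimately show False using x a by force
        qed
        show False using \<open>v \<noteq> v'\<close> *[of v v'] *[of v' v] v by linarith
      qed
    qed
    moreover have "Q ` V2 \<subseteq> \<rat>" using Q by auto
    ultimately show ?thesis by (meson countable_image_inj_on countable_rat countable_subset)
  qed
  ultimately show ?thesis by (meson countable_Un countable_subset)
qed

lemma borel_split: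
  assumes inj: "\<And>x y. p x = p y \<Longrightarrow> (x \<in> C \<longleftrightarrow> y \<in> C) \<Longrightarrow> x = y"
    and "A \<in> sel_borel (fsel p C)"
  shows "countable (splitset p C A)"
  using assms(2) unfolding sel_borel_def
proof induction
  case (Basic a)
  then show ?case using goodopen_split goodopen_gen[OF inj]
    unfolding sel_topology_def openin_topology_generated_by_iff by auto
next
  case Empty
  then show ?case by (simp add: splitset_def)
next
  case (Compl a)
  have "splitset p C (UNIV - a) = splitset p C a" unfolding splitset_def by auto
  then show ?case using Compl by simp
next
  case (Union a)
  have "splitset p C (\<Union>i. a i) \<subseteq> (\<Union>i. splitset p C (a i))" unfolding splitset_def by blast
  then show ?case using Union by (meson countable_UN countable_subset UNIV_I countableI_type)
qed



lemma outer_zero: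
  assumes inj: "\<And>x y. p x = p y \<Longrightarrow> (x \<in> C \<longleftrightarrow> y \<in> C) \<Longrightarrow> x = y"
    and ab: "\<And>n. \<bar>b n - a n\<bar> \<le> (1/2)^n"
    and cov: "\<And>x N. \<exists>n\<ge>N. klt p C (a n) x \<and> klt p C x (b n)"
  shows "sel_outer (fsel p C) A = 0"
proof -
  have "sel_outer (fsel p C) A \<le> 0"
  proof (rule ennreal_le_epsilon)
    fix e :: real assume "0 < e"
    then obtain N where N: "(1/2::real)^N < e/2" using real_arch_pow_inv[of "e/2" "1/2::real"] by auto
    let ?r = "\<lambda>k. a (k + N)" and ?s = "\<lambda>k. b (k + N)"
    have cover: "A \<subseteq> (\<Union>k. sel_Ioc (fsel p C) (?r k) (?s k))"
    proof
      fix x assume "x \<in> A"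
      obtain n where n: "n \<ge> N" "klt p C (a n) x" "klt p C x (b n)" using cov by blast
      then have "x \<in> sel_Ioc (fsel p C) (?r (n - N)) (?s (n - N))"
        by (simp add: sel_Ioc_def sel_le_def sel_less_fsel[OF inj])
      then show "x \<in> (\<Union>k. sel_Ioc (fsel p C) (?r k) (?s k))" by (rule UN_I[OF UNIV_I])
    qed
    have geo: "(\<lambda>k. (1/2::real)^(k+N)) sums ((1/2)^N * 2)"
    proof -
      have "(\<lambda>k. (1/2::real)^N * (1/2)^k) sums ((1/2)^N * (1 / (1 - 1/2)))"
        by (intro sums_mult geometric_sums) simp
      then show ?thesis by (simp add: power_add mult.commute)
    qed
    have "(\<Sum>k. ennreal \<bar>?s k - ?r k\<bar>) \<le> (\<Sum>k. ennreal ((1/2)^(k+N)))"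
      by (intro suminf_le summableI) (use ab in \<open>auto intro: ennreal_leI\<close>)
    also have "\<dots> = ennreal (\<Sum>k. (1/2::real)^(k+N))"
      using geo by (intro suminf_ennreal2) (auto simp: sums_summable)
    also have "\<dots> = ennreal ((1/2)^N * 2)" using geo sums_unique by metis
    also have "\<dots> \<le> ennreal e" using N by (intro ennreal_leI) simp
    finally have "(\<Sum>k. ennreal \<bar>?s k - ?r k\<bar>) \<le> ennreal e" .
    moreover have "sel_outer (fsel p C) A \<le> (\<Sum>k. ennreal \<bar>?s k - ?r k\<bar>)"
      unfolding sel_outer_def
      by (rule Inf_lower, rule CollectI, rule exI[of _ ?r], rule exI[of _ ?s]) (simp add: cover)
    ultimately show "sel_outer (fsel p C) A \<le> 0 + ennreal e" unfolding add_0_left by (rule order_trans[rotated])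
  qed
  then show ?thesis by (simp only: le_zero_eq)
qed

lemma measurable_all:
  assumes "\<And>A. sel_outer f A = 0"
  shows "C \<in> sel_measurable f"
proof -
  have "\<forall>x\<in>UNIV. sel_outer f (C \<inter> x) + sel_outer f ((UNIV - C) \<inter> x) = sel_outer f x"
    by (simp only: assms add_0_left ball_simps simp_thms)
  then show ?thesis unfolding sel_measurable_def lambda_system_def by blast
qed



theorem theorem3p21:
  fixes C :: "real set"
  assumes "C \<approx> (UNIV :: real set)" and "(UNIV - C) \<approx> (UNIV :: real set)"
  shows "\<exists>f. two_point_selection f \<and> C \<in> sel_measurable f - sel_borel f"
proof -
  obtain e1 where e1: "bij_betw e1 C (UNIV::real set)" using assms(1) unfolding eqpoll_def by auto
  obtain e2 where e2: "bij_betw e2 (UNIV - C) (UNIV::real set)" using assms(2) unfolding eqpoll_def by auto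
  define gC where "gC t = inv_into C e1 t" for t
  define gN where "gN t = inv_into (UNIV - C) e2 t" for t
  define idx where "idx x = (if x \<in> C then e1 x else e2 x)" for x
  have gC: "gC t \<in> C" "e1 (gC t) = t" for t
    using e1 unfolding gC_def bij_betw_def by (auto intro: inv_into_into f_inv_into_f)
  have gN: "gN t \<notin> C" "e2 (gN t) = t" for t
  proof -
    have "gN t \<in> UNIV - C" unfolding gN_def
      by (rule inv_into_into) (use e2 in \<open>auto simp: bij_betw_def\<close>)
    then show "gN t \<notin> C" by simp
    show "e2 (gN t) = t" unfolding gN_def
      by (rule f_inv_into_f) (use e2 in \<open>auto simp: bij_betw_def\<close>)
  qed
  have idx_g: "idx (gC t) = t" "idx (gN t) = t" for t using gC gN by (auto simp: idx_def)
  have gC_inv: "x \<in> C \<Longrightarrow> gC (idx x) = x" for x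
    using e1 unfolding gC_def idx_def bij_betw_def by auto
  have gN_inv: "x \<notin> C \<Longrightarrow> gN (idx x) = x" for x
    using e2 unfolding gN_def idx_def bij_betw_def by auto
  have idx_inj: "x = y" if "idx x = idx y" "x \<in> C \<longleftrightarrow> y \<in> C" for x y
    by (metis gC_inv gN_inv that)
  define mx where "mx t = max (gC t) (gN t)" for t
  have mx_ge: "x \<le> mx (idx x)" for x
    by (cases "x \<in> C") (auto simp: mx_def gC_inv gN_inv)
  have mx_inj: "t = t'" if "mx t = mx t'" for t t'
    using that gC gN unfolding mx_def max_def by (metis (full_types))
  define a where "a n = 3 * real n" for n :: nat
  define S where "S = idx ` range a"
  define Z where "Z = gC ` S \<union> gN ` S"
  have "countable S" unfolding S_def by simp
  then have cZ: "countable Z" unfolding Z_def by simp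
  have Z: "x \<in> Z" if "idx x \<in> S" for x
    using that gC_inv gN_inv unfolding Z_def by (metis Un_iff image_eqI)
  have "\<exists>y. y \<in> {a n<..<a n + (1/2)^n} - Z" for n
  proof -
    have "uncountable {a n<..<a n + (1/2)^n}" by (simp add: uncountable_open_interval)
    then have "uncountable ({a n<..<a n + (1/2)^n} - Z)" using cZ
      by (rule uncountable_minus_countable)
    then show ?thesis by (metis countable_empty ex_in_conv)
  qed
  then obtain b where b: "\<And>n. b n \<in> {a n<..<a n + (1/2)^n} - Z" by metis
  define U where "U = idx ` range b"
  have SU: "S \<inter> U = {}" using b Z unfolding U_def by auto
  have a0: "0 \<le> a n" for n by (simp add: a_def)
  have mxS: "t \<in> S \<Longrightarrow> 0 \<le> mx t" for t
    unfolding S_def using mx_ge a0 by (smt (verit, best) imageE)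
  have mxU: "t \<in> U \<Longrightarrow> 0 \<le> mx t" for t
    unfolding U_def using mx_ge a0 b by (smt (verit, best) imageE DiffD1 greaterThanLessThan_iff)
  define \<psi> where "\<psi> t = (if t \<in> S then -2 - mx t else if t \<in> U then 2 + mx t else arctan t)" for t
  have arcb: "-2 < arctan t \<and> arctan t < 2" for t
    using arctan_lbound[of t] arctan_ubound[of t] pi_less_4 by linarith
  have psi_inj: "inj \<psi>"
  proof (rule injI)
    fix t t' assume eq: "\<psi> t = \<psi> t'"
    show "t = t'"
      using eq SU mxS[of t] mxS[of t'] mxU[of t] mxU[of t'] arcb[of t] arcb[of t'] mx_inj[of t t']
      unfolding \<psi>_def by (auto split: if_splits simp: arctan_eq_iff)
  qed
  define p where "p x = \<psi> (idx x)" for x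
  have pinj: "x = y" if "p x = p y" "x \<in> C \<longleftrightarrow> y \<in> C" for x y
    using that psi_inj idx_inj unfolding p_def inj_def by blast
  have ab: "\<bar>b n - a n\<bar> \<le> (1/2)^n" for n using b[of n] by auto
  have pa: "p (a n) \<le> -2 - 3 * real n" for n
  proof -
    have "idx (a n) \<in> S" unfolding S_def by auto
    then show ?thesis using mx_ge[of "a n"] unfolding p_def \<psi>_def a_def by auto
  qed
  have pb: "p (b n) \<ge> 2 + 3 * real n" for n
  proof -
    have "idx (b n) \<in> U" unfolding U_def by auto
    then have "idx (b n) \<notin> S" using SU by auto
    then show ?thesis using mx_ge[of "b n"] b[of n] \<open>idx (b n) \<in> U\<close> unfolding p_def \<psi>_def a_def by auto
  qed
  have cov: "\<exists>n\<ge>N. klt p C (a n) x \<and> klt p C x (b n)" for x N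
  proof -
    obtain n :: nat where n: "n \<ge> N" "real n > \<bar>p x\<bar>"
      using reals_Archimedean2[of "\<bar>p x\<bar>"] by (metis le_cases less_le_trans nat_le_real_less not_less of_nat_le_iff)
    then show ?thesis using pa[of n] pb[of n] unfolding klt_def
      by (intro exI[of _ n]) auto
  qed
  define f where "f = fsel p C"
  have tp: "two_point_selection f" unfolding f_def by (rule two_point_fsel) (use pinj in auto)
  have meas: "C \<in> sel_measurable f" unfolding f_def
    by (rule measurable_all, rule outer_zero[OF _ ab cov]) (use pinj in auto)
  have "range \<psi> \<subseteq> splitset p C C"
  proof
    fix v assume "v \<in> range \<psi>"
    then obtain t where "v = \<psi> t" by auto
    then show "v \<in> splitset p C C" unfolding splitset_def
      using gC gN idx_g unfolding p_def by (intro CollectI exI[of _ "gC t"] exI[of _ "gN t"]) auto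
  qed
  moreover have "uncountable (range \<psi>)"
    using psi_inj countable_image_inj_on uncountable_UNIV_real by blast
  ultimately have "uncountable (splitset p C C)" using countable_subset by blast
  then have "C \<notin> sel_borel f" unfolding f_def using borel_split[of p C C] pinj by blast
  then show ?thesis using tp meas by blast
qed

end
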